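(* Let $(S,\varepsilon),(S',\varepsilon')\in\mathcal{SC}(\mathcal M)$ with $(S,\varepsilon)\le(S',\varepsilon')$ and $S'\subsetneq S$. Then $\operatorname{genus}(S',\varepsilon')<\operatorname{genus}(S,\varepsilon)$. Consequently $\mathcal{SC}(\mathcal M)$ is graded, with the degree of $(S,\varepsilon)$ equal to $\operatorname{genus}(\mathcal M)-\operatorname{genus}(S,\varepsilon)$. (In particular, for a finite graph $G$, the poset of strongly connected orientations of subgraphs is graded by $\operatorname{genus}(G)-\operatorname{genus}(H)$.)
   Context: Let $\mathcal M$ be a regular matroid on a finite ground set $E$, represented over $\mathbb R$ by a totally unimodular matrix $M$ with columns $c_e$, $e\in E$. $\operatorname{genus}(\mathcal M)=\dim\ker M$. An oriented submatroid is a pair $(S,\varepsilon)$ with $S\subseteq E$ and $\varepsilon:S\to\{\pm1\}$. It is strongly connected if for every $e\in S$ there is $w\in\mathbb Z_{\ge0}^S$ with $w_e\ge1$ and $\sum_{f\in S}w_f\varepsilon_f c_f=0$. The genus of $(S,\varepsilon)$ is $\dim\ker M_S$, where $M_S$ is the submatrix of columns indexed by $S$. $\mathcal{SC}(\mathcal M)$ is the set of strongly connected oriented submatroids, ordered by $(S,\varepsilon)\le(S',\varepsilon')$ iff $S'\subseteq S$ and $\varepsilon'=\varepsilon|_{S'}$. For a graph, the genus of a (possibly disconnected) subgraph $H$ (on all vertices) is the dimension of the kernel of its signed incidence matrix. *)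

theory Defs
  imports "Jordan_Normal_Form.DL_Submatrix" "Jordan_Normal_Form.Matrix_Kernel"
          "Jordan_Normal_Form.Determinant"
begin

text \<open>A real matrix M; ground set E = column indices {..<dim_col M}; column e is c_e.\<close>

definition totally_unimodular :: "real mat \<Rightarrow> bool" where
  "totally_unimodular M \<longleftrightarrow>
     (\<forall>I J. I \<subseteq> {..<dim_row M} \<longrightarrow> J \<subseteq> {..<dim_col M} \<longrightarrow> card I = card J \<longrightarrow>
        det (submatrix M I J) \<in> {-1, 0, 1})"

definition genus :: "real mat \<Rightarrow> nat" where
  "genus M = kernel_dim M"

definition oriented_submatroid :: "real mat \<Rightarrow> nat set \<Rightarrow> (nat \<Rightarrow> int) \<Rightarrow> bool" where
  "oriented_submatroid M S eps \<longleftrightarrow>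
     S \<subseteq> {..<dim_col M} \<and> (\<forall>f\<in>S. eps f = 1 \<or> eps f = -1) \<and> (\<forall>f. f \<notin> S \<longrightarrow> eps f = 0)"

definition strongly_connected :: "real mat \<Rightarrow> nat set \<Rightarrow> (nat \<Rightarrow> int) \<Rightarrow> bool" where
  "strongly_connected M S eps \<longleftrightarrow> oriented_submatroid M S eps \<and>
     (\<forall>e\<in>S. \<exists>w :: nat \<Rightarrow> nat. w e \<ge> 1 \<and>
        (\<forall>r<dim_row M. (\<Sum>f\<in>S. real (w f) * real_of_int (eps f) * M $$ (r, f)) = 0))"

definition SC :: "real mat \<Rightarrow> (nat set \<times> (nat \<Rightarrow> int)) set" where
  "SC M = {(S, eps). strongly_connected M S eps}"

definition genus_sub :: "real mat \<Rightarrow> nat set \<Rightarrow> nat" where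
  "genus_sub M S = kernel_dim (submatrix M UNIV S)"

definition sc_le :: "nat set \<times> (nat \<Rightarrow> int) \<Rightarrow> nat set \<times> (nat \<Rightarrow> int) \<Rightarrow> bool" where
  "sc_le x y \<longleftrightarrow> fst y \<subseteq> fst x \<and> (\<forall>f\<in>fst y. snd y f = snd x f)"

definition sc_less :: "nat set \<times> (nat \<Rightarrow> int) \<Rightarrow> nat set \<times> (nat \<Rightarrow> int) \<Rightarrow> bool" where
  "sc_less x y \<longleftrightarrow> sc_le x y \<and> x \<noteq> y"

definition sc_covers :: "real mat \<Rightarrow> nat set \<times> (nat \<Rightarrow> int) \<Rightarrow> nat set \<times> (nat \<Rightarrow> int) \<Rightarrow> bool" where
  "sc_covers M x y \<longleftrightarrow> x \<in> SC M \<and> y \<in> SC M \<and> sc_less x y \<and>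
     \<not> (\<exists>z\<in>SC M. sc_less x z \<and> sc_less z y)"

definition sc_degree :: "real mat \<Rightarrow> nat set \<times> (nat \<Rightarrow> int) \<Rightarrow> int" where
  "sc_degree M x = int (genus M) - int (genus_sub M (fst x))"

end

theory Submission
  imports Defs
begin

lemma (in vectorspace) subspace_basis:
  assumes fd: "fin_dim" and sub: "subspace K U V"
  shows "\<exists>B. finite B \<and> B \<subseteq> U \<and> lin_indpt B \<and> span B = U \<and> vectorspace.dim K (vs U) = card B"
proof -
  interpret U: vectorspace K "vs U" using subspace_is_vs[OF sub] .
  have submod: "submodule K U V" using sub by (simp add: subspace_def)
  have bnd: "finite A \<and> card A \<le> dim" if "A \<subseteq> carrier (vs U) \<and> U.lin_indpt A" for A
  proof -
    have "A \<subseteq> U" using that by simp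
    moreover have "lin_indpt A" using that span_li_not_depend(2)[OF \<open>A \<subseteq> U\<close> submod] by simp
    moreover have "U \<subseteq> carrier V" using submod by (simp add: submodule_def)
    ultimately show ?thesis using li_le_dim[OF fd] by blast
  qed
  have e: "{} \<subseteq> carrier (vs U) \<and> U.lin_indpt {}" by (simp add: U.lin_dep_def)
  obtain A where A: "finite A" "maximal A (\<lambda>S. S \<subseteq> carrier (vs U) \<and> U.lin_indpt S)"
    using maximal_exists[of "\<lambda>S. S \<subseteq> carrier (vs U) \<and> U.lin_indpt S" dim, OF bnd e] by blast
  have gen: "U.gen_set A" by (rule U.max_li_is_gen[OF A(2)])
  have AU: "A \<subseteq> U" and liA: "U.lin_indpt A" using A(2) by (auto simp: maximal_def)
  have "U.basis A" using gen AU liA by (simp add: U.basis_def)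
  hence d: "U.dim = card A" using U.dim_basis A(1) by blast
  have "lin_indpt A" using liA span_li_not_depend(2)[OF AU submod] by simp
  moreover have "span A = U" using gen span_li_not_depend(1)[OF AU submod] by simp
  ultimately show ?thesis using A(1) AU d by blast
qed

lemma (in vectorspace) subspace_dim_less:
  assumes fd: "fin_dim" and sub: "subspace K U V" and sub': "subspace K U' V"
    and UU: "U \<subseteq> U'" and x: "x \<in> U'" "x \<notin> U"
  shows "vectorspace.dim K (vs U) < vectorspace.dim K (vs U')"
proof -
  obtain B where B: "finite B" "B \<subseteq> U" "lin_indpt B" "span B = U" "vectorspace.dim K (vs U) = card B"
    using subspace_basis[OF fd sub] by blast
  obtain B' where B': "finite B'" "B' \<subseteq> U'" "lin_indpt B'" "span B' = U'" "vectorspace.dim K (vs U') = card B'"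
    using subspace_basis[OF fd sub'] by blast
  interpret U': vectorspace K "vs U'" using subspace_is_vs[OF sub'] .
  have submod: "submodule K U' V" using sub' by (simp add: subspace_def)
  have Uc: "U' \<subseteq> carrier V" using submod by (simp add: submodule_def)
  have xB: "x \<notin> B" using x B(2) by auto
  have li: "lin_indpt (B \<union> {x})"
    using lin_dep_iff_in_span[of B x] B x Uc UU by auto
  have sub2: "B \<union> {x} \<subseteq> U'" using B(2) UU x by auto
  have li': "U'.lin_indpt (B \<union> {x})" using li span_li_not_depend(2)[OF sub2 submod] by simp
  have fd': "U'.fin_dim" unfolding U'.fin_dim_def
    using B' span_li_not_depend(1)[OF B'(2) submod] by auto
  have "card (B \<union> {x}) \<le> U'.dim" using U'.li_le_dim[OF fd' _ li'] sub2 by simp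
  thus ?thesis using B(1,5) xB by simp
qed

lemma (in vectorspace) subspace_dim_le_plus1:
  assumes fd: "fin_dim" and sub: "subspace K U V" and sub': "subspace K U' V"
    and P: "P \<in> carrier V" and UU: "U' \<subseteq> span (insert P U)"
  shows "vectorspace.dim K (vs U') \<le> vectorspace.dim K (vs U) + 1"
proof -
  obtain B where B: "finite B" "B \<subseteq> U" "lin_indpt B" "span B = U" "vectorspace.dim K (vs U) = card B"
    using subspace_basis[OF fd sub] by blast
  obtain B' where B': "finite B'" "B' \<subseteq> U'" "lin_indpt B'" "span B' = U'" "vectorspace.dim K (vs U') = card B'"
    using subspace_basis[OF fd sub'] by blast
  have Uc: "U \<subseteq> carrier V" using sub by (simp add: subspace_def submodule_def)
  have Ic: "insert P B \<subseteq> carrier V" using P B(2) Uc by auto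
  define Z where "Z = span (insert P B)"
  have Zsub: "submodule K Z V" unfolding Z_def by (rule span_is_submodule[OF Ic])
  have "U \<subseteq> Z" unfolding Z_def using span_is_monotone[of B "insert P B"] B(4) by auto
  hence "insert P U \<subseteq> Z" using in_own_span[OF Ic] unfolding Z_def by auto
  hence "span (insert P U) \<subseteq> Z" using span_is_subset[OF _ Zsub] by blast
  hence B'Z: "B' \<subseteq> Z" using UU B'(2) by auto
  interpret Z: vectorspace K "vs Z" using subspace_is_vs Zsub by (simp add: subspace_def vectorspace_axioms)
  have li': "Z.lin_indpt B'" using B'(3) span_li_not_depend(2)[OF B'Z Zsub] by simp
  have IZ: "insert P B \<subseteq> Z" using in_own_span[OF Ic] unfolding Z_def .
  have gen: "Z.gen_set (insert P B)" using span_li_not_depend(1)[OF IZ Zsub] unfolding Z_def by simp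
  have "card B' \<le> card (insert P B)"
    using Z.li_smaller_than_gen[OF B'(1) _ _ _ li' gen] B(1) B'Z IZ by simp
  also have "\<dots> \<le> card B + 1" using B(1) by (simp add: card_insert_if)
  finally show ?thesis using B(5) B'(5) by simp
qed

definition Wk :: "real mat \<Rightarrow> nat set \<Rightarrow> real vec set" where
  "Wk M S = {v \<in> carrier_vec (dim_col M). M *\<^sub>v v = 0\<^sub>v (dim_row M) \<and> (\<forall>f<dim_col M. f \<notin> S \<longrightarrow> v $ f = 0)}"

lemma Wk_subspace: "subspace class_ring (Wk M S) (module_vec TYPE(real) (dim_col M))"
proof -
  interpret V: vec_space "TYPE(real)" "dim_col M" .
  have Mc: "M \<in> carrier_mat (dim_row M) (dim_col M)" by auto
  have "submodule class_ring (Wk M S) V.V"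
  proof (rule submodule.intro)
    show "module class_ring V.V" by (rule V.module_axioms)
    show "Wk M S \<subseteq> carrier V.V" by (auto simp: Wk_def)
    show "\<zero>\<^bsub>V.V\<^esub> \<in> Wk M S" by (auto simp: Wk_def)
    fix a b assume a: "a \<in> Wk M S" and b: "b \<in> Wk M S"
    show "a \<oplus>\<^bsub>V.V\<^esub> b \<in> Wk M S" using a b
      by (auto simp: Wk_def mult_add_distrib_mat_vec[OF Mc])
  next
    fix c x assume x: "x \<in> Wk M S"
    show "c \<odot>\<^bsub>V.V\<^esub> x \<in> Wk M S" using x
      by (auto simp: Wk_def mult_mat_vec[OF Mc])
  qed
  thus ?thesis unfolding subspace_def using V.vectorspace_axioms by simp
qed

lemma idx_lt: fixes S :: "nat set" assumes "finite S" "f \<in> S" shows "card {a \<in> S. a < f} < card S"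
proof -
  have "f \<notin> {a \<in> S. a < f}" by simp
  hence "{a \<in> S. a < f} \<subset> S" using assms by blast
  thus ?thesis using assms psubset_card_mono by blast
qed

lemma bij_pick: assumes "finite S" shows "bij_betw (pick S) {..<card S} S"
proof (rule bij_betw_imageI)
  show "inj_on (pick S) {..<card S}"
    by (rule inj_onI) (metis card_pick lessThan_iff)
  show "pick S ` {..<card S} = S"
  proof
    show "pick S ` {..<card S} \<subseteq> S" using pick_in_set by auto
    show "S \<subseteq> pick S ` {..<card S}"
    proof
      fix f assume f: "f \<in> S"
      have "card {a \<in> S. a < f} < card S" using idx_lt[OF assms f] .
      thus "f \<in> pick S ` {..<card S}" using pick_card_in_set[OF f] by force
    qed
  qed
qed

lemma mult_vec_index_sum: 
  assumes "v \<in> carrier_vec (dim_col A)" "r < dim_row A"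
  shows "(A *\<^sub>v v) $ r = (\<Sum>j<dim_col A. A $$ (r, j) * v $ j)"
  using assms by (auto simp: scalar_prod_def lessThan_atLeast0 intro!: sum.cong)

lemma genus_sub_dim:
  fixes M :: "real mat"
  assumes S: "S \<subseteq> {..<dim_col M}"
  shows "genus_sub M S = vectorspace.dim class_ring ((module_vec TYPE(real) (dim_col M))\<lparr>carrier := Wk M S\<rparr>)"
proof -
  define n where "n = dim_col M"
  define m where "m = dim_row M"
  define A where "A = submatrix M UNIV S"
  define k where "k = card S"
  have finS: "finite S" using S finite_subset by blast
  have kA: "dim_col A = k" unfolding A_def k_def dim_submatrix
    using S by (intro arg_cong[where f=card]) auto
  have mA: "dim_row A = m" unfolding A_def m_def dim_submatrix by simp
  have Ac: "A \<in> carrier_mat m k" using kA mA by auto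
  have Aent: "A $$ (r, j) = M $$ (r, pick S j)" if "r < m" "j < k" for r j
    unfolding A_def using that kA mA
    by (subst submatrix_index) (auto simp: A_def m_def pick_UNIV dim_submatrix)
  interpret K: kernel m k A by (unfold_locales, rule Ac)
  interpret V: vec_space "TYPE(real)" n .
  have subW: "subspace class_ring (Wk M S) V.V" using Wk_subspace[of M S] unfolding n_def .
  interpret W: vectorspace class_ring "V.vs (Wk M S)" using V.subspace_is_vs[OF subW] .
  define T where "T = (\<lambda>v :: real vec. vec n (\<lambda>f. if f \<in> S then v $ card {a \<in> S. a < f} else 0))"
  have Tpick: "T v $ pick S j = v $ j" if "j < k" for v j
  proof -
    have "pick S j \<in> S" using that pick_in_set k_def by auto
    moreover hence "pick S j < n" using S n_def by auto
    ultimately show ?thesis unfolding T_def using card_pick[of j S] that k_def by auto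
  qed
  have Mrow: "(M *\<^sub>v T v) $ r = (A *\<^sub>v v) $ r" if v: "v \<in> carrier_vec k" and r: "r < m" for v r
  proof -
    have "(M *\<^sub>v T v) $ r = (\<Sum>f<n. M $$ (r, f) * T v $ f)"
      using r by (subst mult_vec_index_sum) (auto simp: T_def n_def m_def)
    also have "\<dots> = (\<Sum>f\<in>S. M $$ (r, f) * T v $ f)"
      using S by (intro sum.mono_neutral_right) (auto simp: T_def n_def)
    also have "\<dots> = (\<Sum>j<k. M $$ (r, pick S j) * T v $ pick S j)"
      using sum.reindex_bij_betw[OF bij_pick[OF finS], of "\<lambda>f. M $$ (r, f) * T v $ f"] k_def by simp
    also have "\<dots> = (\<Sum>j<k. A $$ (r, j) * v $ j)"
      using Aent r Tpick by simp
    also have "\<dots> = (A *\<^sub>v v) $ r" using v r kA mA by (subst mult_vec_index_sum) auto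
    finally show ?thesis .
  qed
  have TW: "T v \<in> Wk M S" if "v \<in> mat_kernel A" for v
  proof -
    have v: "v \<in> carrier_vec k" and Av: "A *\<^sub>v v = 0\<^sub>v m" using that mat_kernelD[OF Ac] by auto
    have z: "\<forall>r<m. (M *\<^sub>v T v) $ r = 0" using Mrow[OF v] Av by simp
    have "M *\<^sub>v T v = 0\<^sub>v (dim_row M)"
      by (rule eq_vecI) (use z in \<open>auto simp: m_def\<close>)
    thus ?thesis unfolding Wk_def by (auto simp: T_def n_def)
  qed
  have lin: "linear_map class_ring K.VK (V.vs (Wk M S)) T"
  proof -
    have "mod_hom class_ring K.VK (V.vs (Wk M S)) T"
    proof (intro mod_hom.intro mod_hom_axioms.intro)
      show "module class_ring K.VK" by (rule K.Ker.module_axioms)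
      show "module class_ring (V.vs (Wk M S))" by (rule W.module_axioms)
      have add: "T (v + w) = T v + T w" if "v \<in> carrier_vec k" "w \<in> carrier_vec k" for v w
        using that idx_lt[OF finS] by (auto simp: T_def k_def intro!: eq_vecI)
      have sm: "T (c \<cdot>\<^sub>v v) = c \<cdot>\<^sub>v T v" if "v \<in> carrier_vec k" for c v
        using that idx_lt[OF finS] by (auto simp: T_def k_def intro!: eq_vecI)
      show "T \<in> module_hom class_ring K.VK (V.vs (Wk M S))"
        unfolding module_hom_def using TW add sm
        by (auto simp: mat_kernel_def kA)
    qed
    thus ?thesis by (intro linear_map.intro K.Ker.vectorspace_axioms W.vectorspace_axioms)
  qed
  interpret L: linear_map class_ring K.VK "V.vs (Wk M S)" T by (rule lin)
  have fd: "K.Ker.fin_dim"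
  proof -
    obtain B where "finite B" "K.basis B" using kernel_basis_exists[OF Ac] by blast
    thus ?thesis unfolding K.Ker.fin_dim_def K.Ker.basis_def by auto
  qed
  have inj: "inj_on T (carrier K.VK)"
  proof (rule inj_onI)
    fix v w assume v: "v \<in> carrier K.VK" and w: "w \<in> carrier K.VK" and e: "T v = T w"
    have vc: "v \<in> carrier_vec k" "w \<in> carrier_vec k" using v w mat_kernelD[OF Ac] by auto
    show "v = w"
    proof (rule eq_vecI)
      fix j assume "j < dim_vec w" hence j: "j < k" using vc by simp
      show "v $ j = w $ j" using Tpick[OF j, of v] Tpick[OF j, of w] e by simp
    qed (use vc in simp)
  qed
  have surj: "T ` carrier K.VK = carrier (V.vs (Wk M S))"
  proof
    show "T ` carrier K.VK \<subseteq> carrier (V.vs (Wk M S))" using TW by auto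
    show "carrier (V.vs (Wk M S)) \<subseteq> T ` carrier K.VK"
    proof
      fix u assume "u \<in> carrier (V.vs (Wk M S))"
      hence u: "u \<in> Wk M S" by simp
      hence uc: "u \<in> carrier_vec n" and Mu: "M *\<^sub>v u = 0\<^sub>v m" and u0: "\<forall>f<n. f \<notin> S \<longrightarrow> u $ f = 0"
        by (auto simp: Wk_def n_def m_def)
      define v where "v = vec k (\<lambda>j. u $ pick S j)"
      have vc: "v \<in> carrier_vec k" by (simp add: v_def)
      have Tv: "T v = u"
      proof (rule eq_vecI)
        fix f assume "f < dim_vec u" hence f: "f < n" using uc by simp
        show "T v $ f = u $ f"
        proof (cases "f \<in> S")
          case True
          thus ?thesis using f idx_lt[OF finS True] pick_card_in_set[OF True]
            by (simp add: T_def v_def k_def)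
        qed (use f u0 in \<open>simp add: T_def\<close>)
      qed (use uc in \<open>simp add: T_def\<close>)
      have z: "\<forall>r<m. (A *\<^sub>v v) $ r = 0" using Mrow[OF vc] Tv Mu by simp
      have "A *\<^sub>v v = 0\<^sub>v m"
        by (rule eq_vecI) (use z in \<open>auto simp: mA\<close>)
      hence "v \<in> carrier K.VK" using vc by (simp add: mat_kernel_def mA kA)
      thus "u \<in> T ` carrier K.VK" using Tv by blast
    qed
  qed
  have "genus_sub M S = K.dim"
    unfolding genus_sub_def A_def[symmetric] kernel_dim_def kA by simp
  also have "\<dots> = W.dim" by (rule L.dim_eq[OF fd inj surj])
  finally show ?thesis unfolding n_def .
qed

definition qindep :: "nat \<Rightarrow> (nat \<Rightarrow> real) \<Rightarrow> bool" where
  "qindep k b \<longleftrightarrow> (\<forall>q. (\<forall>j<k. q j \<in> \<rat>) \<longrightarrow> (\<Sum>j<k. q j * b j) = 0 \<longrightarrow> (\<forall>j<k. q j = 0))"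

lemma qbasis:
  fixes x :: "nat \<Rightarrow> real"
  shows "\<exists>k b c. qindep k b \<and> (\<forall>i<n. \<forall>j<k. c i j \<in> \<rat>) \<and> (\<forall>i<n. x i = (\<Sum>j<k. c i j * b j))"
proof (induction n)
  case 0
  show ?case by (rule exI[of _ 0]) (auto simp: qindep_def)
next
  case (Suc n)
  then obtain k b c where qi: "qindep k b" and cq: "\<forall>i<n. \<forall>j<k. c i j \<in> \<rat>"
    and xe: "\<forall>i<n. x i = (\<Sum>j<k. c i j * b j)" by blast
  show ?case
  proof (cases "\<exists>d. (\<forall>j<k. d j \<in> \<rat>) \<and> x n = (\<Sum>j<k. d j * b j)")
    case True
    then obtain d where d: "\<forall>j<k. d j \<in> \<rat>" "x n = (\<Sum>j<k. d j * b j)" by blast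
    have "\<forall>i<Suc n. \<forall>j<k. (c(n := d)) i j \<in> \<rat>"
      using cq d(1) by (simp add: less_Suc_eq)
    moreover have "\<forall>i<Suc n. x i = (\<Sum>j<k. (c(n := d)) i j * b j)"
      using xe d(2) by (simp add: less_Suc_eq)
    ultimately show ?thesis using qi by blast
  next
    case False
    define b' where "b' = b(k := x n)"
    define c' where "c' = ((\<lambda>i j. if i = n then (if j = k then 1 else 0) else (if j = k then 0 else c i j)) :: nat \<Rightarrow> nat \<Rightarrow> real)"
    have q1: "\<forall>i<Suc n. \<forall>j<Suc k. c' i j \<in> \<rat>" using cq by (simp add: c'_def less_Suc_eq)
    have e1: "x i = (\<Sum>j<Suc k. c' i j * b' j)" if "i < Suc n" for i
    proof (cases "i = n")
      case True
      have "(\<Sum>j<Suc k. c' i j * b' j) = (\<Sum>j<k. c' i j * b' j) + c' i k * b' k" by simp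
      also have "(\<Sum>j<k. c' i j * b' j) = 0" using True by (auto simp: c'_def)
      finally show ?thesis using True by (simp add: c'_def b'_def)
    next
      case False
      hence i: "i < n" using that by simp
      have "(\<Sum>j<Suc k. c' i j * b' j) = (\<Sum>j<k. c' i j * b' j) + c' i k * b' k" by simp
      also have "(\<Sum>j<k. c' i j * b' j) = (\<Sum>j<k. c i j * b j)"
        using False by (intro sum.cong) (auto simp: c'_def b'_def)
      finally show ?thesis using False xe i by (simp add: c'_def)
    qed
    have qi': "qindep (Suc k) b'"
      unfolding qindep_def
    proof (rule allI, rule impI, rule impI)
      fix q :: "nat \<Rightarrow> real" assume qq: "\<forall>j<Suc k. q j \<in> \<rat>" and s: "(\<Sum>j<Suc k. q j * b' j) = 0"
      have s2: "(\<Sum>j<k. q j * b j) + q k * x n = 0"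
      proof -
        have "(\<Sum>j<k. q j * b' j) = (\<Sum>j<k. q j * b j)" by (intro sum.cong) (auto simp: b'_def)
        thus ?thesis using s by (simp add: b'_def)
      qed
      have qk: "q k = 0"
      proof (rule ccontr)
        assume nz: "q k \<noteq> 0"
        define d where "d = (\<lambda>j. - q j / q k)"
        have "\<forall>j<k. d j \<in> \<rat>" using qq by (auto simp: d_def)
        moreover have "x n = (\<Sum>j<k. d j * b j)"
        proof -
          have "x n = - (\<Sum>j<k. q j * b j) / q k" using s2 nz by (simp add: field_simps)
          also have "\<dots> = (\<Sum>j<k. d j * b j)"
            by (simp add: d_def sum_divide_distrib sum_negf)
          finally show ?thesis .
        qed
        ultimately show False using False by blast
      qed
      have s3: "(\<Sum>j<k. q j * b j) = 0" using s2 qk by simp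
      have "\<forall>j<k. q j = 0" using qi[unfolded qindep_def] qq s3 by auto
      thus "\<forall>j<Suc k. q j = 0" using qk less_Suc_eq by auto
    qed
    show ?thesis using qi' q1 e1 by blast
  qed
qed

lemma rat_decomp:
  fixes M :: "real mat"
  assumes Mq: "\<forall>r<dim_row M. \<forall>f<dim_col M. M $$ (r, f) \<in> \<rat>" and v: "v \<in> Wk M S"
  shows "\<exists>(k::nat) b y. (\<forall>j<k. y j \<in> Wk M S \<and> (\<forall>i<dim_col M. y j $ i \<in> \<rat>))
           \<and> (\<forall>i<dim_col M. v $ i = (\<Sum>j<k. b j * y j $ i))"
proof -
  define n where "n = dim_col M"
  obtain k b c where qi: "qindep k b" and cq: "\<forall>i<n. \<forall>j<k. c i j \<in> \<rat>"
    and xe: "\<forall>i<n. v $ i = (\<Sum>j<k. c i j * b j)" using qbasis[of n "\<lambda>i. v $ i"] by blast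
  define y where "y = (\<lambda>j. vec n (\<lambda>i. c i j))"
  have vc: "v \<in> carrier_vec n" and Mv: "M *\<^sub>v v = 0\<^sub>v (dim_row M)" and v0: "\<forall>f<n. f \<notin> S \<longrightarrow> v $ f = 0"
    using v by (auto simp: Wk_def n_def)
  have yW: "y j \<in> Wk M S" if j: "j < k" for j
  proof -
    have row: "(\<Sum>f<n. M $$ (r, f) * c f j) = 0" if r: "r < dim_row M" for r
    proof -
      define q where "q = (\<lambda>j. \<Sum>f<n. M $$ (r, f) * c f j)"
      have "\<forall>j<k. q j \<in> \<rat>"
      proof (intro allI impI)
        fix j assume "j < k"
        thus "q j \<in> \<rat>" unfolding q_def using Mq cq r
          by (intro Rats_sum Rats_mult) (auto simp: n_def)
      qed
      moreover have "(\<Sum>j<k. q j * b j) = 0"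
      proof -
        have "(\<Sum>j<k. q j * b j) = (\<Sum>j<k. \<Sum>f<n. M $$ (r, f) * c f j * b j)"
          unfolding q_def by (simp add: sum_distrib_right)
        also have "\<dots> = (\<Sum>f<n. \<Sum>j<k. M $$ (r, f) * c f j * b j)" by (rule sum.swap)
        also have "\<dots> = (\<Sum>f<n. M $$ (r, f) * (\<Sum>j<k. c f j * b j))"
          by (simp add: sum_distrib_left mult.assoc)
        also have "\<dots> = (\<Sum>f<n. M $$ (r, f) * v $ f)" using xe by simp
        also have "\<dots> = (M *\<^sub>v v) $ r" using r vc by (subst mult_vec_index_sum) (auto simp: n_def)
        finally show ?thesis using Mv r by simp
      qed
      ultimately have "\<forall>j<k. q j = 0" using qi[unfolded qindep_def, rule_format, of q] by blast
      thus ?thesis using j by (simp add: q_def)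
    qed
    have "M *\<^sub>v y j = 0\<^sub>v (dim_row M)"
    proof (rule eq_vecI)
      fix r assume "r < dim_vec (0\<^sub>v (dim_row M) :: real vec)"
      hence r: "r < dim_row M" by simp
      have "(M *\<^sub>v y j) $ r = (\<Sum>f<n. M $$ (r, f) * y j $ f)"
        using r by (subst mult_vec_index_sum) (auto simp: y_def n_def)
      also have "\<dots> = (\<Sum>f<n. M $$ (r, f) * c f j)" by (simp add: y_def)
      finally show "(M *\<^sub>v y j) $ r = 0\<^sub>v (dim_row M) $ r" using row[OF r] r by simp
    qed simp
    moreover have "y j $ f = 0" if "f < n" "f \<notin> S" for f
    proof -
      define q where "q = (\<lambda>j. c f j)"
      have "\<forall>j<k. q j \<in> \<rat>" using cq that by (auto simp: q_def)
      moreover have "(\<Sum>j<k. q j * b j) = 0" using xe v0 that by (simp add: q_def)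
      ultimately have "\<forall>j<k. q j = 0" using qi[unfolded qindep_def, rule_format, of q] by blast
      hence "c f j = 0" using j by (simp add: q_def)
      thus ?thesis using that by (simp add: y_def)
    qed
    ultimately show ?thesis by (auto simp: Wk_def y_def n_def)
  qed
  have yq: "\<forall>i<n. y j $ i \<in> \<rat>" if "j < k" for j using cq that by (simp add: y_def)
  have "\<forall>i<n. v $ i = (\<Sum>j<k. b j * y j $ i)" using xe by (simp add: y_def mult.commute)
  moreover have "\<forall>j<k. y j \<in> Wk M S \<and> (\<forall>i<n. y j $ i \<in> \<rat>)" using yW yq by blast
  ultimately have "(\<forall>j<k. y j \<in> Wk M S \<and> (\<forall>i<n. y j $ i \<in> \<rat>)) \<and> (\<forall>i<n. v $ i = (\<Sum>j<k. b j * y j $ i))"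
    by blast
  thus ?thesis unfolding n_def by blast
qed

lemma TU_rat:
  assumes TU: "totally_unimodular M"
  shows "\<forall>r<dim_row M. \<forall>f<dim_col M. M $$ (r, f) \<in> \<rat>"
proof (intro allI impI)
  fix r f assume r: "r < dim_row M" and f: "f < dim_col M"
  have c1: "{i. i < dim_row M \<and> i \<in> {r}} = {r}" "{j. j < dim_col M \<and> j \<in> {f}} = {f}" using r f by blast+
  have pr: "pick {r} 0 = r" "pick {f} 0 = f" by (auto intro!: Least_equality)
  have d1: "dim_row (submatrix M {r} {f}) = 1" "dim_col (submatrix M {r} {f}) = 1"
    unfolding dim_submatrix c1 by simp_all
  have sc: "submatrix M {r} {f} \<in> carrier_mat 1 1" by (rule carrier_matI[OF d1])
  have "submatrix M {r} {f} $$ (0, 0) = M $$ (pick {r} 0, pick {f} 0)"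
    by (rule submatrix_index) (unfold c1, simp_all)
  hence "submatrix M {r} {f} $$ (0, 0) = M $$ (r, f)" unfolding pr .
  hence "det (submatrix M {r} {f}) = M $$ (r, f)" using det_single[OF sc] by simp
  moreover have "det (submatrix M {r} {f}) \<in> {-1, 0, 1}"
    using TU[unfolded totally_unimodular_def, rule_format, of "{r}" "{f}"] r f by simp
  ultimately show "M $$ (r, f) \<in> \<rat>" by auto
qed

lemma common_denom:
  fixes F :: "real set"
  assumes "finite F" "F \<subseteq> \<rat>"
  shows "\<exists>N::nat. N > 0 \<and> (\<forall>x\<in>F. real N * x \<in> \<int>)"
  using assms
proof (induction F rule: finite_induct)
  case empty show ?case by (rule exI[of _ 1]) simp
next
  case (insert x F)
  then obtain N where N: "N > 0" "\<forall>y\<in>F. real N * y \<in> \<int>" by auto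
  have "x \<in> \<rat>" using insert by auto
  then obtain a b where ab: "b > 0" "x = of_int a / of_int b" by (rule Rats_cases') 
  define N' where "N' = N * nat b"
  have "N' > 0" using N ab by (simp add: N'_def)
  moreover have "real N' * x \<in> \<int>" using ab by (simp add: N'_def)
  moreover have "real N' * y \<in> \<int>" if "y \<in> F" for y
  proof -
    have "real N' = of_int b * real N" using ab by (simp add: N'_def)
    hence e: "real N' * y = of_int b * (real N * y)" by simp
    have "of_int b * (real N * y) \<in> \<int>" using Ints_mult[OF Ints_of_int[of b] N(2)[rule_format, OF that]] .
    thus ?thesis unfolding e .
  qed
  ultimately show ?case by blast
qed

lemma SC_pos:
  fixes M :: "real mat"
  assumes sc: "strongly_connected M S eps"
  shows "\<exists>p::nat\<Rightarrow>nat. (\<forall>f\<in>S. p f \<ge> 1) \<and>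
     vec (dim_col M) (\<lambda>f. if f \<in> S then real (p f) * real_of_int (eps f) else 0) \<in> Wk M S"
proof -
  have os: "oriented_submatroid M S eps" using sc by (simp add: strongly_connected_def)
  hence S: "S \<subseteq> {..<dim_col M}" by (simp add: oriented_submatroid_def)
  have finS: "finite S" using S finite_subset by blast
  have "\<forall>e\<in>S. \<exists>w :: nat \<Rightarrow> nat. w e \<ge> 1 \<and>
        (\<forall>r<dim_row M. (\<Sum>f\<in>S. real (w f) * real_of_int (eps f) * M $$ (r, f)) = 0)"
    using sc by (simp add: strongly_connected_def)
  then obtain W where W: "\<And>e. e \<in> S \<Longrightarrow> W e e \<ge> 1"
    "\<And>e r. e \<in> S \<Longrightarrow> r < dim_row M \<Longrightarrow> (\<Sum>f\<in>S. real (W e f) * real_of_int (eps f) * M $$ (r, f)) = 0"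
    by metis
  define p where "p = (\<lambda>f. \<Sum>e\<in>S. W e f)"
  have p1: "\<forall>f\<in>S. p f \<ge> 1"
  proof
    fix f assume f: "f \<in> S"
    have "W f f \<le> p f" unfolding p_def using f finS by (intro member_le_sum) auto
    thus "p f \<ge> 1" using W(1)[OF f] by simp
  qed
  define P where "P = vec (dim_col M) (\<lambda>f. if f \<in> S then real (p f) * real_of_int (eps f) else 0)"
  have "M *\<^sub>v P = 0\<^sub>v (dim_row M)"
  proof (rule eq_vecI)
    fix r assume "r < dim_vec (0\<^sub>v (dim_row M) :: real vec)"
    hence r: "r < dim_row M" by simp
    have "(M *\<^sub>v P) $ r = (\<Sum>f<dim_col M. M $$ (r, f) * P $ f)"
      using r by (subst mult_vec_index_sum) (auto simp: P_def)
    also have "\<dots> = (\<Sum>f\<in>S. M $$ (r, f) * P $ f)"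
      using S by (intro sum.mono_neutral_right) (auto simp: P_def)
    also have "\<dots> = (\<Sum>f\<in>S. \<Sum>e\<in>S. real (W e f) * real_of_int (eps f) * M $$ (r, f))"
    proof (rule sum.cong)
      fix f assume f: "f \<in> S"
      hence "f < dim_col M" using S by auto
      thus "M $$ (r, f) * P $ f = (\<Sum>e\<in>S. real (W e f) * real_of_int (eps f) * M $$ (r, f))"
        using f by (simp add: P_def p_def of_nat_sum sum_distrib_left sum_distrib_right mult_ac)
    qed simp
    also have "\<dots> = (\<Sum>e\<in>S. \<Sum>f\<in>S. real (W e f) * real_of_int (eps f) * M $$ (r, f))"
      by (rule sum.swap)
    also have "\<dots> = 0" using W(2) r by simp
    finally show "(M *\<^sub>v P) $ r = 0\<^sub>v (dim_row M) $ r" using r by simp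
  qed simp
  hence "P \<in> Wk M S" by (auto simp: Wk_def P_def)
  thus ?thesis using p1 unfolding P_def by (intro exI[of _ p] conjI)
qed

lemma rat_span_subset:
  fixes M :: "real mat"
  assumes Mq: "\<forall>r<dim_row M. \<forall>f<dim_col M. M $$ (r, f) \<in> \<rat>"
    and subZ: "submodule class_ring Z (module_vec TYPE(real) (dim_col M))"
    and hyp: "\<And>y. y \<in> Wk M S \<Longrightarrow> (\<forall>i<dim_col M. y $ i \<in> \<rat>) \<Longrightarrow> y \<in> Z"
  shows "Wk M S \<subseteq> Z"
proof
  fix v assume v: "v \<in> Wk M S"
  define n where "n = dim_col M"
  interpret V: vec_space "TYPE(real)" n .
  interpret Zs: submodule class_ring Z V.V using subZ unfolding n_def .
  obtain k :: nat and b y where y: "\<forall>j<k. y j \<in> Wk M S \<and> (\<forall>i<n. y j $ i \<in> \<rat>)"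
    and ve: "\<forall>i<n. v $ i = (\<Sum>j<k. b j * y j $ i)"
    using rat_decomp[OF Mq v] unfolding n_def by blast
  have yc: "y j \<in> carrier_vec n" if "j < k" for j using y that by (auto simp: Wk_def n_def)
  define s where "s = (\<lambda>t. vec n (\<lambda>i. \<Sum>j<t. b j * y j $ i))"
  have "t \<le> k \<longrightarrow> s t \<in> Z" for t
  proof (induction t)
    case 0
    have "s 0 = 0\<^sub>v n" by (auto simp: s_def)
    thus ?case using Zs.zero_closed by simp
  next
    case (Suc t)
    show ?case
    proof
      assume t: "Suc t \<le> k"
      hence st: "s t \<in> Z" using Suc by simp
      have "y t \<in> Wk M S" "\<forall>i<dim_col M. y t $ i \<in> \<rat>" using y t n_def by auto
      hence yt: "y t \<in> Z" by (rule hyp)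
      have "s (Suc t) = s t + b t \<cdot>\<^sub>v y t"
        using yc[of t] t by (auto simp: s_def)
      moreover have "s t + b t \<cdot>\<^sub>v y t \<in> Z" using Zs.m_closed[OF st Zs.smult_closed[OF _ yt, of "b t"]] by simp
      ultimately show "s (Suc t) \<in> Z" by simp
    qed
  qed
  hence "s k \<in> Z" by simp
  moreover have "s k = v" using ve v by (auto simp: s_def Wk_def n_def)
  ultimately show "v \<in> Z" by simp
qed

lemma Wk_lin:
  assumes "u \<in> Wk M S" "v \<in> Wk M S"
  shows "a \<cdot>\<^sub>v u + b \<cdot>\<^sub>v v \<in> Wk M S"
proof -
  have Mc: "M \<in> carrier_mat (dim_row M) (dim_col M)" by auto
  have uc: "u \<in> carrier_vec (dim_col M)" and vc: "v \<in> carrier_vec (dim_col M)" using assms by (auto simp: Wk_def)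
  have "M *\<^sub>v (a \<cdot>\<^sub>v u + b \<cdot>\<^sub>v v) = a \<cdot>\<^sub>v (M *\<^sub>v u) + b \<cdot>\<^sub>v (M *\<^sub>v v)"
    using uc vc by (simp add: mult_add_distrib_mat_vec[OF Mc] mult_mat_vec[OF Mc])
  also have "\<dots> = 0\<^sub>v (dim_row M)" using assms by (auto simp: Wk_def)
  finally show ?thesis using assms uc vc by (auto simp: Wk_def)
qed

lemma Wk_mono: "S' \<subseteq> S \<Longrightarrow> Wk M S' \<subseteq> Wk M S"
  by (auto simp: Wk_def)

lemma key_claim:
  fixes M :: "real mat" and S S' :: "nat set" and eps eps' :: "nat \<Rightarrow> int"
  assumes scS: "strongly_connected M S eps" and scS': "strongly_connected M S' eps'"
    and sub: "S' \<subset> S" and agree: "\<forall>f\<in>S'. eps' f = eps f"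
    and nointer: "\<not> (\<exists>z\<in>SC M. sc_less (S, eps) z \<and> sc_less z (S', eps'))"
    and p: "\<forall>f\<in>S. p f \<ge> (1::nat)"
    and PW: "vec (dim_col M) (\<lambda>f. if f \<in> S then real (p f) * real_of_int (eps f) else 0) \<in> Wk M S"
    and p': "\<forall>f\<in>S'. p' f \<ge> (1::nat)"
    and PW': "vec (dim_col M) (\<lambda>f. if f \<in> S' then real (p' f) * real_of_int (eps' f) else 0) \<in> Wk M S'"
    and y: "y \<in> Wk M S" and yq: "\<forall>i<dim_col M. y $ i \<in> \<rat>"
  shows "\<exists>c. y + (-c) \<cdot>\<^sub>v vec (dim_col M) (\<lambda>f. if f \<in> S then real (p f) * real_of_int (eps f) else 0) \<in> Wk M S'"
proof (rule ccontr)
  assume H: "\<not> ?thesis"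
  define n where "n = dim_col M"
  define P where "P = vec n (\<lambda>f. if f \<in> S then real (p f) * real_of_int (eps f) else 0)"
  define P' where "P' = vec n (\<lambda>f. if f \<in> S' then real (p' f) * real_of_int (eps' f) else 0)"
  define e where "e = (\<lambda>f. real_of_int (eps f))"
  have osS: "oriented_submatroid M S eps" using scS by (simp add: strongly_connected_def)
  have S: "S \<subseteq> {..<n}" using osS by (simp add: oriented_submatroid_def n_def)
  have finS: "finite S" using S finite_subset by blast
  have es: "e f * e f = 1" if "f \<in> S" for f
    using osS that unfolding oriented_submatroid_def e_def by auto
  have eone: "e f = 1 \<or> e f = -1" if "f \<in> S" for f
    using osS that unfolding oriented_submatroid_def e_def by auto
  have e0: "eps f = 0" if "f \<notin> S" for f
    using osS that unfolding oriented_submatroid_def by auto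
  have S'S: "S' \<subseteq> S" using sub by auto
  have PW2: "P \<in> Wk M S" using PW by (simp add: P_def n_def)
  have PW2': "P' \<in> Wk M S'" using PW' by (simp add: P'_def n_def)
  have Pi: "P $ f = (if f \<in> S then real (p f) * e f else 0)" if "f < n" for f
    using that by (simp add: P_def e_def)
  have P'i: "P' $ f = (if f \<in> S' then real (p' f) * e f else 0)" if "f < n" for f
    using that agree by (simp add: P'_def e_def)
  have yc: "y \<in> carrier_vec n" using y by (simp add: Wk_def n_def)
  have Pc: "P \<in> carrier_vec n" "P' \<in> carrier_vec n" by (simp_all add: P_def P'_def)
  have y0: "y $ f = 0" if "f < n" "f \<notin> S" for f using y that by (simp add: Wk_def n_def)
  define D where "D = S - S'"
  have Dne: "D \<noteq> {}" and finD: "finite D" using sub finS by (auto simp: D_def)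
  define a where "a = (\<lambda>f. e f * y $ f)"
  define r where "r = (\<lambda>f. a f / real (p f))"
  define t where "t = Max (r ` D)"
  have "t \<in> r ` D" using Max_in[of "r ` D"] finD Dne unfolding t_def by auto
  then obtain g where g: "g \<in> D" "r g = t" by auto
  have rle: "r f \<le> t" if "f \<in> D" for f using finD that unfolding t_def by auto
  have ppos: "real (p f) > 0" if "f \<in> S" for f using p that by fastforce
  have ya: "y $ f = e f * a f" if "f \<in> S" for f
    using es[OF that] by (simp add: a_def mult.assoc[symmetric])
  have Dsub: "D \<subseteq> S" "\<And>f. f \<in> D \<Longrightarrow> f \<notin> S'" by (auto simp: D_def)
  have Dn: "f < n" if "f \<in> D" for f using that Dsub S by auto
  obtain h where h: "h \<in> D" "r h < t"
  proof (rule ccontr)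
    assume "\<not> thesis"
    with that have req: "\<forall>f\<in>D. r f = t" using rle by force
    have "y + (-t) \<cdot>\<^sub>v P \<in> Wk M S'"
    proof -
      have "1 \<cdot>\<^sub>v y + (-t) \<cdot>\<^sub>v P \<in> Wk M S" by (rule Wk_lin[OF y PW2])
      hence w: "y + (-t) \<cdot>\<^sub>v P \<in> Wk M S" by simp
      have "(y + (-t) \<cdot>\<^sub>v P) $ f = 0" if "f < n" "f \<notin> S'" for f
      proof (cases "f \<in> S")
        case True
        hence fD: "f \<in> D" using that by (simp add: D_def)
        have "r f = t" using req fD by simp
        hence "a f = t * real (p f)" using ppos[OF True] by (simp add: r_def field_simps)
        thus ?thesis using that yc Pc Pi[OF that(1)] ya[OF True] True by (simp add: algebra_simps)
      next
        case False
        thus ?thesis using that yc Pc Pi[OF that(1)] y0 by simp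
      qed
      thus ?thesis using w by (simp add: Wk_def n_def)
    qed
    thus False using H unfolding P_def n_def by blast
  qed
  define u where "u = t \<cdot>\<^sub>v P + (-1) \<cdot>\<^sub>v y"
  have uW: "u \<in> Wk M S" unfolding u_def by (rule Wk_lin[OF PW2 y])
  have uc: "u \<in> carrier_vec n" using uW by (simp add: Wk_def n_def)
  have ui: "e f * u $ f = real (p f) * (t - r f)" if "f \<in> S" for f
  proof -
    have fn: "f < n" using that S by auto
    have "e f * u $ f = t * real (p f) * (e f * e f) - a f"
      using fn yc Pc Pi[OF fn] that by (simp add: u_def a_def algebra_simps)
    also have "\<dots> = real (p f) * (t - r f)" using es[OF that] ppos[OF that] by (simp add: r_def field_simps)
    finally show ?thesis .
  qed
  define c where "c = (\<Sum>f\<in>S'. \<bar>u $ f\<bar>) + 1"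
  have c1: "c \<ge> 1" unfolding c_def by (simp add: sum_nonneg)
  define z where "z = 1 \<cdot>\<^sub>v u + c \<cdot>\<^sub>v P'"
  have P'S: "P' \<in> Wk M S" using PW2' Wk_mono[OF S'S] by auto
  have zW: "z \<in> Wk M S" unfolding z_def by (rule Wk_lin[OF uW P'S])
  have zc: "z \<in> carrier_vec n" using zW by (simp add: Wk_def n_def)
  have zi: "z $ f = u $ f + c * P' $ f" if "f < n" for f using that uc Pc by (simp add: z_def)
  have zS': "e f * z $ f \<ge> 1" if "f \<in> S'" for f
  proof -
    have fS: "f \<in> S" using that S'S by auto
    have fn: "f < n" using fS S by auto
    have "e f * z $ f = e f * u $ f + c * real (p' f)"
      using zi[OF fn] P'i[OF fn] that es[OF fS] by (simp add: algebra_simps)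
    moreover have "\<bar>u $ f\<bar> \<le> (\<Sum>f\<in>S'. \<bar>u $ f\<bar>)"
      using that finite_subset[OF S'S finS] by (intro member_le_sum) auto
    moreover have "\<bar>e f * u $ f\<bar> = \<bar>u $ f\<bar>"
    proof -
      have "\<bar>e f\<bar> = 1" using osS fS unfolding oriented_submatroid_def e_def by auto
      thus ?thesis by (simp add: abs_mult)
    qed
    moreover have "c * real (p' f) \<ge> c" using p' that c1 by (simp add: mult_le_cancel_left1)
    ultimately show ?thesis unfolding c_def by linarith
  qed
  have zD: "e f * z $ f = real (p f) * (t - r f)" if "f \<in> D" for f
    using zi[OF Dn[OF that]] P'i[OF Dn[OF that]] Dsub(2)[OF that] ui Dsub(1) that by auto
  define T where "T = {f \<in> S. e f * z $ f > 0}"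
  have TS: "T \<subseteq> S" by (auto simp: T_def)
  have S'T: "S' \<subseteq> T" using zS' S'S by (force simp: T_def)
  have hT: "h \<in> T" using h zD[OF h(1)] ppos Dsub by (auto simp: T_def)
  have gT: "g \<notin> T" using g zD[OF g(1)] by (auto simp: T_def)
  have hS': "h \<notin> S'" using h Dsub by auto
  have gS: "g \<in> S" using g Dsub by auto
  have z0: "z $ f = 0" if "f < n" "f \<notin> T" for f
  proof (cases "f \<in> S")
    case True
    hence fD: "f \<in> D" using that S'T by (auto simp: D_def)
    have "e f * z $ f \<ge> 0" using zD[OF fD] rle[OF fD] ppos[OF True] by simp
    hence "e f * z $ f = 0" using that True by (auto simp: T_def)
    thus ?thesis using eone[OF True] by auto
  next
    case False
    thus ?thesis using zW that by (simp add: Wk_def n_def)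
  qed
  have eq: "e f \<in> \<int>" for f by (simp add: e_def)
  have tq: "t \<in> \<rat>"
  proof -
    have "g < n" using Dn g by auto
    thus ?thesis using yq g by (auto simp: r_def a_def e_def n_def)
  qed
  have uq: "u $ f \<in> \<rat>" if "f < n" for f
    using that yc Pc Pi[OF that] yq tq by (auto simp: u_def e_def n_def)
  have cq: "c \<in> \<rat>" unfolding c_def using uq S'S S
    by (intro Rats_add Rats_sum) (auto intro!: Rats_abs_iff[THEN iffD2])
  have zq: "z $ f \<in> \<rat>" if "f < n" for f
    using zi[OF that] P'i[OF that] uq[OF that] cq by (auto simp: e_def)
  obtain N :: nat where N: "N > 0" "\<forall>x\<in>(\<lambda>f. z $ f) ` {..<n}. real N * x \<in> \<int>"
    using common_denom[of "(\<lambda>f. z $ f) ` {..<n}"] zq by auto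
  define wT where "wT = (\<lambda>f. nat \<lfloor>real N * (e f * z $ f)\<rfloor>)"
  have wTi: "real (wT f) = real N * (e f * z $ f) \<and> wT f \<ge> 1" if "f \<in> T" for f
  proof -
    have fn: "f < n" using that TS S by auto
    have "real N * (e f * z $ f) = e f * (real N * z $ f)" by simp
    moreover have "real N * z $ f \<in> \<int>" using N(2) fn by auto
    ultimately have i: "real N * (e f * z $ f) \<in> \<int>" using eq by (metis Ints_mult)
    have pos: "real N * (e f * z $ f) > 0" using that N(1) by (simp add: T_def)
    from i obtain k where k: "real N * (e f * z $ f) = of_int k" by (auto elim: Ints_cases)
    hence "k > 0" using pos by simp
    thus ?thesis using k by (simp add: wT_def)
  qed
  define epsT where "epsT = (\<lambda>f. if f \<in> T then eps f else 0)"
  have scT: "strongly_connected M T epsT"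
    unfolding strongly_connected_def
  proof (intro conjI ballI)
    show "oriented_submatroid M T epsT"
      using osS TS unfolding oriented_submatroid_def epsT_def by auto
    fix e0 assume e0T: "e0 \<in> T"
    have rows: "\<forall>r<dim_row M. (\<Sum>f\<in>T. real (wT f) * real_of_int (epsT f) * M $$ (r, f)) = 0"
    proof (intro allI impI)
      fix r assume r: "r < dim_row M"
      have "(\<Sum>f\<in>T. real (wT f) * real_of_int (epsT f) * M $$ (r, f)) = (\<Sum>f\<in>T. real N * (M $$ (r, f) * z $ f))"
      proof (rule sum.cong)
        fix f assume fT: "f \<in> T"
        have ee: "e f * e f = 1" using es fT TS by auto
        have "real (wT f) * real_of_int (epsT f) * M $$ (r, f) = real N * (e f * e f) * (M $$ (r, f) * z $ f)"
          using wTi[OF fT] fT by (simp add: epsT_def e_def mult_ac)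
        thus "real (wT f) * real_of_int (epsT f) * M $$ (r, f) = real N * (M $$ (r, f) * z $ f)"
          unfolding ee by simp
      qed simp
      also have "\<dots> = real N * (\<Sum>f\<in>T. M $$ (r, f) * z $ f)" by (simp add: sum_distrib_left)
      also have "(\<Sum>f\<in>T. M $$ (r, f) * z $ f) = (\<Sum>f<n. M $$ (r, f) * z $ f)"
        using TS S z0 by (intro sum.mono_neutral_left) auto
      also have "\<dots> = (M *\<^sub>v z) $ r" using r zc by (subst mult_vec_index_sum) (auto simp: n_def)
      also have "\<dots> = 0" using zW r by (simp add: Wk_def)
      finally show "(\<Sum>f\<in>T. real (wT f) * real_of_int (epsT f) * M $$ (r, f)) = 0" by simp
    qed
    show "\<exists>w :: nat \<Rightarrow> nat. w e0 \<ge> 1 \<and>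
        (\<forall>r<dim_row M. (\<Sum>f\<in>T. real (w f) * real_of_int (epsT f) * M $$ (r, f)) = 0)"
      using wTi[OF e0T] rows by (intro exI[of _ wT]) simp
  qed
  have "(T, epsT) \<in> SC M" using scT by (simp add: SC_def)
  moreover have "sc_less (S, eps) (T, epsT)"
    unfolding sc_less_def sc_le_def using TS gT gS by (auto simp: epsT_def)
  moreover have "sc_less (T, epsT) (S', eps')"
    unfolding sc_less_def sc_le_def using S'T hT hS' agree by (auto simp: epsT_def)
  ultimately show False using nointer by blast
qed


lemma part1:
  fixes M :: "real mat"
  assumes scS: "strongly_connected M S eps" and scS': "strongly_connected M S' eps'"
    and sub: "S' \<subset> S"
  shows "genus_sub M S' < genus_sub M S"
proof -
  define n where "n = dim_col M"
  have S: "S \<subseteq> {..<n}" using scS by (simp add: strongly_connected_def oriented_submatroid_def n_def)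
  have S': "S' \<subseteq> {..<n}" using scS' by (simp add: strongly_connected_def oriented_submatroid_def n_def)
  obtain p where p: "\<forall>f\<in>S. p f \<ge> (1::nat)"
    and PW: "vec n (\<lambda>f. if f \<in> S then real (p f) * real_of_int (eps f) else 0) \<in> Wk M S"
    using SC_pos[OF scS] unfolding n_def by blast
  define P where "P = vec n (\<lambda>f. if f \<in> S then real (p f) * real_of_int (eps f) else 0)"
  obtain e where e: "e \<in> S" "e \<notin> S'" using sub by auto
  have en: "e < n" using e S by auto
  have "eps e \<noteq> 0" using scS e by (auto simp: strongly_connected_def oriented_submatroid_def)
  hence "P $ e \<noteq> 0" using en e p by (auto simp: P_def)
  hence PnW: "P \<notin> Wk M S'" using en e by (auto simp: Wk_def n_def)
  interpret V: vec_space "TYPE(real)" n .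
  have "vectorspace.dim class_ring (V.vs (Wk M S')) < vectorspace.dim class_ring (V.vs (Wk M S))"
    using V.subspace_dim_less[OF V.fin_dim Wk_subspace[of M S', folded n_def] Wk_subspace[of M S, folded n_def]
        Wk_mono[of S' S M] _ PnW] PW sub unfolding P_def by auto
  thus ?thesis using genus_sub_dim[of S M] genus_sub_dim[of S' M] S S' unfolding n_def by simp
qed

lemma part2:
  fixes M :: "real mat"
  assumes Mq: "\<forall>r<dim_row M. \<forall>f<dim_col M. M $$ (r, f) \<in> \<rat>"
    and cov: "sc_covers M x y"
  shows "genus_sub M (fst x) = genus_sub M (fst y) + 1"
proof -
  obtain S eps where x: "x = (S, eps)" by (cases x)
  obtain S' eps' where y: "y = (S', eps')" by (cases y)
  have scS: "strongly_connected M S eps" and scS': "strongly_connected M S' eps'"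
    using cov by (auto simp: sc_covers_def SC_def x y)
  have le: "S' \<subseteq> S" "\<forall>f\<in>S'. eps' f = eps f" and ne: "(S, eps) \<noteq> (S', eps')"
    using cov by (auto simp: sc_covers_def sc_less_def sc_le_def x y)
  have nointer: "\<not> (\<exists>z\<in>SC M. sc_less (S, eps) z \<and> sc_less z (S', eps'))"
    using cov by (simp add: sc_covers_def x y)
  have sub: "S' \<subset> S"
  proof -
    have "S' \<noteq> S"
    proof
      assume eq: "S' = S"
      have "eps' = eps"
      proof
        fix f show "eps' f = eps f"
        proof (cases "f \<in> S")
          case True thus ?thesis using le eq by auto
        next
          case False thus ?thesis using scS scS' eq
            by (auto simp: strongly_connected_def oriented_submatroid_def)
        qed
      qed
      thus False using ne eq by simp
    qed
    thus ?thesis using le by auto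
  qed
  have lt: "genus_sub M S' < genus_sub M S" by (rule part1[OF scS scS' sub])
  define n where "n = dim_col M"
  have S: "S \<subseteq> {..<n}" using scS by (simp add: strongly_connected_def oriented_submatroid_def n_def)
  have S': "S' \<subseteq> {..<n}" using scS' by (simp add: strongly_connected_def oriented_submatroid_def n_def)
  obtain p where p: "\<forall>f\<in>S. p f \<ge> (1::nat)"
    and PW: "vec (dim_col M) (\<lambda>f. if f \<in> S then real (p f) * real_of_int (eps f) else 0) \<in> Wk M S"
    using SC_pos[OF scS] by blast
  obtain p' where p': "\<forall>f\<in>S'. p' f \<ge> (1::nat)"
    and PW': "vec (dim_col M) (\<lambda>f. if f \<in> S' then real (p' f) * real_of_int (eps' f) else 0) \<in> Wk M S'"
    using SC_pos[OF scS'] by blast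
  define P where "P = vec n (\<lambda>f. if f \<in> S then real (p f) * real_of_int (eps f) else 0)"
  interpret V: vec_space "TYPE(real)" n .
  have Pc: "P \<in> carrier_vec n" by (simp add: P_def)
  have Wc: "Wk M S' \<subseteq> carrier_vec n" by (auto simp: Wk_def n_def)
  have Ic: "insert P (Wk M S') \<subseteq> carrier_vec n" using Pc Wc by simp
  define Z where "Z = V.span (insert P (Wk M S'))"
  have Zsub: "submodule class_ring Z V.V" unfolding Z_def by (rule V.span_is_submodule[OF Ic])
  interpret Zs: submodule class_ring Z V.V by (rule Zsub)
  have IZ: "insert P (Wk M S') \<subseteq> Z" unfolding Z_def using V.in_own_span[OF Ic] .
  have WZ: "Wk M S \<subseteq> Z"
  proof (rule rat_span_subset[OF Mq Zsub[unfolded n_def]])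
    fix v assume v: "v \<in> Wk M S" and vq: "\<forall>i<dim_col M. v $ i \<in> \<rat>"
    obtain c where c: "v + (-c) \<cdot>\<^sub>v P \<in> Wk M S'"
      using key_claim[OF scS scS' sub le(2) nointer p PW p' PW' v vq] unfolding P_def n_def by blast
    have vc: "v \<in> carrier_vec n" using v by (simp add: Wk_def n_def)
    have a: "v + (-c) \<cdot>\<^sub>v P \<in> Z" using c IZ by auto
    have b: "c \<cdot>\<^sub>v P \<in> Z" using Zs.smult_closed[of c P] IZ by simp
    have "(v + (-c) \<cdot>\<^sub>v P) + c \<cdot>\<^sub>v P \<in> Z" using Zs.m_closed[OF a b] by simp
    moreover have "(v + (-c) \<cdot>\<^sub>v P) + c \<cdot>\<^sub>v P = v"
      using vc Pc by (intro eq_vecI) auto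
    ultimately show "v \<in> Z" by simp
  qed
  have "vectorspace.dim class_ring (V.vs (Wk M S)) \<le> vectorspace.dim class_ring (V.vs (Wk M S')) + 1"
    using V.subspace_dim_le_plus1[OF V.fin_dim Wk_subspace[of M S', folded n_def] Wk_subspace[of M S, folded n_def] Pc]
      WZ unfolding Z_def by simp
  hence "genus_sub M S \<le> genus_sub M S' + 1"
    using genus_sub_dim[of S M] genus_sub_dim[of S' M] S S' unfolding n_def by simp
  thus ?thesis using lt x y by simp
qed

theorem mainTheorem3:
  fixes M :: "real mat" and S S' :: "nat set" and eps eps' :: "nat \<Rightarrow> int"
  assumes "totally_unimodular M"
  shows "((S, eps) \<in> SC M \<and> (S', eps') \<in> SC M \<and> sc_le (S, eps) (S', eps') \<and> S' \<subset> S
            \<longrightarrow> genus_sub M S' < genus_sub M S)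
       \<and> (\<forall>x y. sc_covers M x y \<longrightarrow> sc_degree M y = sc_degree M x + 1)"
proof (intro conjI impI allI)
  assume h: "(S, eps) \<in> SC M \<and> (S', eps') \<in> SC M \<and> sc_le (S, eps) (S', eps') \<and> S' \<subset> S"
  show "genus_sub M S' < genus_sub M S"
    using part1[of M S eps S' eps'] h by (simp add: SC_def)
next
  fix x y assume cov: "sc_covers M x y"
  have "genus_sub M (fst x) = genus_sub M (fst y) + 1"
    by (rule part2[OF TU_rat[OF assms] cov])
  thus "sc_degree M y = sc_degree M x + 1" by (simp add: sc_degree_def)
qed

end
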